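(* Let $D=\{(x_1,y_1),\dots,(x_N,y_N)\}$ be a training set with $N$ samples, fix a target index $i\in\{1,\dots,N\}$, and fix a sampling size $z$ with $1\le z< N$. Let $q_\theta(y\mid x,\tilde D)\in[0,1]$ be a fixed predictor satisfying the Fitting Assumption below. Let $w_1=(p^{w_1}_1,\dots,p^{w_1}_N)$ be uniform sampling weights, $p^{w_1}_a=p_0=\frac1N$ for all $a$. For a real number $k$ with $1<k<N$, let $\lambda=\frac{1-kp_0}{1-p_0}=\frac{N-k}{N-1}$ and define new weights $w_2$ by $p^{w_2}_i=k p_0$ and $p^{w_2}_j=\lambda p_0$ for all $j\neq i$ (so $w_2$ is normalized). Define $$\lambda_B=\lambda^z\,\frac{\prod_{a=1}^{z}\bigl(1-(a-1)p_0\bigr)}{\prod_{a=1}^{z}\bigl(1-(a-1)\lambda p_0\bigr)},$$ which satisfies $0<\lambda_B<1$. If $k>(N-z)(1-\lambda_B)+1$, then $$\mathbb{E}\bigl[q_{(\theta,w_2)}(y_i\mid x_i,D)\bigr]>\mathbb{E}\bigl[q_{(\theta,w_1)}(y_i\mid x_i,D)\bigr].$$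
   Context: Fitting Assumption: for every sample $(x_i,y_i)\in D$, every training set $\tilde D$ (a collection of labeled samples), and every other sample $(x_j,y_j)\in D$, $$q_\theta\bigl(y_i\mid x_i,\tilde D\cup\{(x_i,y_i)\}\bigr)>\max\Bigl[q_\theta(y_i\mid x_i,\tilde D),\;q_\theta\bigl(y_i\mid x_i,\tilde D\cup\{(x_j,y_j)\}\bigr)\Bigr].$$ Weighted non-replacement sampling: given normalized weights $w=(p_1,\dots,p_N)$ on the samples of $D$, a subset $D^z_w\subseteq D$ of size $z$ is drawn by selecting $z$ distinct samples sequentially, where at each step a not-yet-selected sample $a$ is chosen with probability $p_a/(1-\sum_{b\text{ already selected}}p_b)$. The sampled PFN predictor is $q_{(\theta,w)}(y\mid x,D)=q_\theta(y\mid x,D^z_w)$, and the expectation $\mathbb{E}[q_{(\theta,w)}(y_i\mid x_i,D)]=\sum_{S}\Pr(D^z_w=S)\,q_\theta(y_i\mid x_i,S)$ is over the random subset $D^z_w$. *)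

theory Defs
  imports Main Complex_Main
begin

text \<open>Samples have an abstract type 's. A predictor is modelled as
  q s T = q_theta(y_s | x_s, T) for a sample s and a training set T.\<close>

text \<open>Probability that weighted non-replacement sampling selects the
  samples in the order given by the (distinct) list xs.\<close>
definition seq_prob :: "('s \<Rightarrow> real) \<Rightarrow> 's list \<Rightarrow> real" where
  "seq_prob w xs = (\<Prod>t<length xs. w (xs ! t) / (1 - sum_list (map w (take t xs))))"

definition subset_prob :: "'s set \<Rightarrow> ('s \<Rightarrow> real) \<Rightarrow> nat \<Rightarrow> 's set \<Rightarrow> real" where
  "subset_prob D w z S =
     (\<Sum>xs\<in>{xs. set xs \<subseteq> D \<and> distinct xs \<and> length xs = z \<and> set xs = S}. seq_prob w xs)"

definition sampled_expectation ::
  "'s set \<Rightarrow> ('s \<Rightarrow> 's set \<Rightarrow> real) \<Rightarrow> ('s \<Rightarrow> real) \<Rightarrow> nat \<Rightarrow> 's \<Rightarrow> real" where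
  "sampled_expectation D q w z i =
     (\<Sum>S\<in>{S. S \<subseteq> D \<and> card S = z}. subset_prob D w z S * q i S)"

text \<open>Fitting Assumption (with the implicit side conditions that the other
  sample differs from s and that s is not already in the training set T).\<close>
definition fitting_assumption :: "'s set \<Rightarrow> ('s \<Rightarrow> 's set \<Rightarrow> real) \<Rightarrow> bool" where
  "fitting_assumption D q \<longleftrightarrow>
     (\<forall>s\<in>D. \<forall>T. \<forall>s'\<in>D. s' \<noteq> s \<and> s \<notin> T \<longrightarrow>
        q s (insert s T) > max (q s T) (q s (insert s' T)))"

end

theory Submission imports Defs "HOL-Combinatorics.Multiset_Permutations" begin


lemma seq_prob_snoc:
  "seq_prob w (xs @ [a]) = seq_prob w xs * (w a / (1 - sum_list (map w xs)))"
proof -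
  have "seq_prob w (xs @ [a]) = (\<Prod>t<Suc (length xs). w ((xs@[a]) ! t) / (1 - sum_list (map w (take t (xs@[a])))))"
    by (simp add: seq_prob_def)
  also have "\<dots> = (\<Prod>t<length xs. w ((xs@[a]) ! t) / (1 - sum_list (map w (take t (xs@[a]))))) * (w a / (1 - sum_list (map w xs)))"
    by (simp add: prod.lessThan_Suc)
  also have "(\<Prod>t<length xs. w ((xs@[a]) ! t) / (1 - sum_list (map w (take t (xs@[a]))))) = seq_prob w xs"
    unfolding seq_prob_def by (rule prod.cong) (auto simp: nth_append)
  finally show ?thesis .
qed

lemma lists_Suc_eq:
  "{xs. set xs \<subseteq> D \<and> distinct xs \<and> length xs = Suc z} =
   (\<lambda>(xs,a). xs @ [a]) ` Sigma {xs. set xs \<subseteq> D \<and> distinct xs \<and> length xs = z} (\<lambda>xs. D - set xs)"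
proof (rule set_eqI, rule iffI)
  fix ys assume "ys \<in> {xs. set xs \<subseteq> D \<and> distinct xs \<and> length xs = Suc z}"
  then have ys: "set ys \<subseteq> D" "distinct ys" "length ys = Suc z" by auto
  then have "ys \<noteq> []" by auto
  then obtain xs a where e: "ys = xs @ [a]" by (metis rev_exhaust)
  show "ys \<in> (\<lambda>(xs,a). xs @ [a]) ` Sigma {xs. set xs \<subseteq> D \<and> distinct xs \<and> length xs = z} (\<lambda>xs. D - set xs)"
    using ys unfolding e by (intro image_eqI[of _ _ "(xs, a)"]) auto
qed auto

lemma total_prob:
  fixes w :: "'s \<Rightarrow> real"
  assumes "finite D" "\<And>a. a \<in> D \<Longrightarrow> w a > 0" "sum w D = 1"
  shows "z \<le> card D \<Longrightarrow> (\<Sum>xs\<in>{xs. set xs \<subseteq> D \<and> distinct xs \<and> length xs = z}. seq_prob w xs) = 1"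
proof (induction z)
  case 0
  have "{xs. set xs \<subseteq> D \<and> distinct xs \<and> length xs = 0} = {[]}" by auto
  then show ?case by (simp add: seq_prob_def)
next
  case (Suc z)
  let ?L = "{xs. set xs \<subseteq> D \<and> distinct xs \<and> length xs = z}"
  have finL: "finite ?L"
    using finite_lists_length_eq[OF assms(1), of z] by (rule finite_subset[rotated]) auto
  have inj: "inj_on (\<lambda>(xs,a). xs @ [a]) (Sigma ?L (\<lambda>xs. D - set xs))"
    by (auto simp: inj_on_def)
  have key: "(\<Sum>a\<in>D - set xs. seq_prob w (xs @ [a])) = seq_prob w xs" if xs: "xs \<in> ?L" for xs
  proof -
    have sl: "sum_list (map w xs) = sum w (set xs)" using xs by (simp add: sum_list_distinct_conv_sum_set)
    have "sum w (D - set xs) = sum w D - sum w (set xs)"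
      using xs assms(1) by (intro sum_diff) auto
    then have s: "sum w (D - set xs) = 1 - sum_list (map w xs)" using sl assms(3) by simp
    have "card (set xs) = z" using xs by (simp add: distinct_card)
    then have "card (set xs) < card D" using Suc.prems by simp
    then have "\<not> D \<subseteq> set xs" using card_mono[of "set xs" D] by auto
    then have "D - set xs \<noteq> {}" by auto
    then have "sum w (D - set xs) > 0" using assms(1,2) by (intro sum_pos) auto
    then have nz: "1 - sum_list (map w xs) \<noteq> 0" using s by simp
    have "(\<Sum>a\<in>D - set xs. seq_prob w (xs @ [a])) = seq_prob w xs * (sum w (D - set xs) / (1 - sum_list (map w xs)))"
      by (simp add: seq_prob_snoc sum_distrib_left sum_divide_distrib)
    also have "\<dots> = seq_prob w xs" using s nz by simp
    finally show ?thesis .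
  qed
  have "(\<Sum>xs\<in>{xs. set xs \<subseteq> D \<and> distinct xs \<and> length xs = Suc z}. seq_prob w xs)
      = (\<Sum>p\<in>Sigma ?L (\<lambda>xs. D - set xs). seq_prob w (fst p @ [snd p]))"
    unfolding lists_Suc_eq by (subst sum.reindex[OF inj]) (simp add: case_prod_beta)
  also have "\<dots> = (\<Sum>xs\<in>?L. \<Sum>a\<in>D - set xs. seq_prob w (xs @ [a]))"
    using finL assms(1) sum.Sigma[of ?L "\<lambda>xs. D - set xs" "\<lambda>xs a. seq_prob w (xs @ [a])"]
    by (simp add: case_prod_beta)
  also have "\<dots> = (\<Sum>xs\<in>?L. seq_prob w xs)" using key by simp
  also have "\<dots> = 1" using Suc by simp
  finally show ?case .
qed



lemma subset_prob_perm:
  assumes "S \<subseteq> D" "card S = z" "finite S"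
  shows "subset_prob D w z S = (\<Sum>xs\<in>permutations_of_set S. seq_prob w xs)"
proof -
  have "{xs. set xs \<subseteq> D \<and> distinct xs \<and> length xs = z \<and> set xs = S} = permutations_of_set S"
    using assms by (auto simp: permutations_of_set_def distinct_card)
  then show ?thesis by (simp add: subset_prob_def)
qed

lemma seq_prob_const:
  assumes "\<And>a. a \<in> set xs \<Longrightarrow> w a = g"
  shows "seq_prob w xs = (\<Prod>t<length xs. g / (1 - real t * g))"
  unfolding seq_prob_def
proof (rule prod.cong[OF refl])
  fix t assume t: "t \<in> {..<length xs}"
  have e1: "map w (take t xs) = map (\<lambda>_. g) (take t xs)"
    using assms by (intro map_cong) (auto dest: in_set_takeD)
  have e2: "sum_list (map (\<lambda>_. g) (take t xs)) = real t * g" using t by (simp add: sum_list_triv)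
  have "sum_list (map w (take t xs)) = real t * g" unfolding e1 e2 ..
  moreover have "w (xs ! t) = g" using t assms by simp
  ultimately show "w (xs ! t) / (1 - sum_list (map w (take t xs))) = g / (1 - real t * g)" by simp
qed

lemma subset_prob_const:
  assumes "S \<subseteq> D" "card S = z" "finite S" "\<And>a. a \<in> S \<Longrightarrow> w a = g"
  shows "subset_prob D w z S = fact z * (\<Prod>t<z. g / (1 - real t * g))"
proof -
  have "subset_prob D w z S = (\<Sum>xs\<in>permutations_of_set S. (\<Prod>t<z. g / (1 - real t * g)))"
    unfolding subset_prob_perm[OF assms(1-3)]
  proof (rule sum.cong[OF refl])
    fix xs assume xs: "xs \<in> permutations_of_set S"
    then have "length xs = z" using assms by (simp add: length_finite_permutations_of_set)
    then show "seq_prob w xs = (\<Prod>t<z. g / (1 - real t * g))"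
      using xs assms(4) seq_prob_const[of xs w g] by (auto simp: permutations_of_set_def)
  qed
  then show ?thesis using assms by simp
qed

lemma seq_prob_map:
  assumes "\<And>a. a \<in> set xs \<Longrightarrow> w (f a) = w a"
  shows "seq_prob w (map f xs) = seq_prob w xs"
  unfolding seq_prob_def
proof (simp, rule prod.cong[OF refl])
  fix t assume t: "t \<in> {..<length xs}"
  have "map w (map f (take t xs)) = map w (take t xs)"
    using assms by (auto dest: in_set_takeD)
  then have e: "sum_list (map w (take t (map f xs))) = sum_list (map w (take t xs))" by (simp only: take_map)
  have e2: "w (f (xs ! t)) = w (xs ! t)" using t assms by simp
  show "w (f (xs ! t)) / (1 - sum_list (map w (take t (map f xs)))) =
         w (xs ! t) / (1 - sum_list (map w (take t xs)))"
    unfolding e e2 ..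
qed

lemma subset_prob_bij:
  assumes "S1 \<subseteq> D" "S2 \<subseteq> D" "card S1 = z" "finite S1" "bij_betw f S1 S2"
    and "\<And>a. a \<in> S1 \<Longrightarrow> w (f a) = w a"
  shows "subset_prob D w z S2 = subset_prob D w z S1"
proof -
  have inj: "inj_on f S1" and im: "f ` S1 = S2" using assms(5) by (auto simp: bij_betw_def)
  have fin2: "finite S2" using bij_betw_finite[OF assms(5)] assms(4) by simp
  have c2: "card S2 = z" using bij_betw_same_card[OF assms(5)] assms(3) by simp
  have injm: "inj_on (map f) (permutations_of_set S1)"
  proof (rule inj_onI)
    fix xs ys assume xs: "xs \<in> permutations_of_set S1" and ys: "ys \<in> permutations_of_set S1"
      and e: "map f xs = map f ys"
    have "inj_on f (set xs \<union> set ys)" using inj xs ys by (simp add: permutations_of_set_def)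
    then show "xs = ys" using e inj_on_map_eq_map by blast
  qed
  have "subset_prob D w z S2 = (\<Sum>xs\<in>map f ` permutations_of_set S1. seq_prob w xs)"
    using subset_prob_perm[OF assms(2) c2 fin2] permutations_of_set_image_inj[OF inj] im by simp
  also have "\<dots> = (\<Sum>xs\<in>permutations_of_set S1. seq_prob w (map f xs))"
    using sum.reindex[OF injm, of "seq_prob w"] by (simp add: comp_def)
  also have "\<dots> = (\<Sum>xs\<in>permutations_of_set S1. seq_prob w xs)"
    using assms(6) by (intro sum.cong refl seq_prob_map) (auto simp: permutations_of_set_def)
  also have "\<dots> = subset_prob D w z S1" using subset_prob_perm[OF assms(1,3,4)] by simp
  finally show ?thesis .
qed



lemma pair_bij:
  fixes F :: "'s set \<Rightarrow> real"
  assumes "finite D" "i \<in> D"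
  shows "(\<Sum>p\<in>Sigma {S. S \<subseteq> D \<and> card S = z \<and> i \<notin> S} (\<lambda>S. S). F (insert i (fst p - {snd p})))
       = (\<Sum>p\<in>Sigma {S. S \<subseteq> D \<and> card S = z \<and> i \<in> S} (\<lambda>S. D - S). F (fst p))"
proof (rule sum.reindex_bij_witness[where i="\<lambda>(S,j). (insert j (S - {i}), j)"
                                     and j="\<lambda>(S,j). (insert i (S - {j}), j)"])
  fix a assume a: "a \<in> Sigma {S. S \<subseteq> D \<and> card S = z \<and> i \<notin> S} (\<lambda>S. S)"
  obtain S j where aa: "a = (S,j)" by (cases a)
  have S: "S \<subseteq> D" "card S = z" "i \<notin> S" "j \<in> S" using a aa by auto
  have fS: "finite S" using S(1) assms(1) finite_subset by blast
  show "(case case a of (S, j) \<Rightarrow> (insert i (S - {j}), j) of (S, j) \<Rightarrow> (insert j (S - {i}), j)) = a"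
    using S aa by auto
  have "card (insert i (S - {j})) = z" using S fS
    by (simp add: card_insert_if) (metis Suc_pred card_gt_0_iff empty_iff)
  then show "(case a of (S, j) \<Rightarrow> (insert i (S - {j}), j)) \<in> Sigma {S. S \<subseteq> D \<and> card S = z \<and> i \<in> S} (\<lambda>S. D - S)"
    using S aa assms by auto
  show "F (fst (case a of (S, j) \<Rightarrow> (insert i (S - {j}), j))) = F (insert i (fst a - {snd a}))"
    using aa by simp
next
  fix b assume b: "b \<in> Sigma {S. S \<subseteq> D \<and> card S = z \<and> i \<in> S} (\<lambda>S. D - S)"
  obtain S j where bb: "b = (S,j)" by (cases b)
  have S: "S \<subseteq> D" "card S = z" "i \<in> S" "j \<in> D" "j \<notin> S" using b bb by auto
  have fS: "finite S" using S(1) assms(1) finite_subset by blast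
  show "(case case b of (S, j) \<Rightarrow> (insert j (S - {i}), j) of (S, j) \<Rightarrow> (insert i (S - {j}), j)) = b"
    using S bb by auto
  have "card (insert j (S - {i})) = z" using S fS
    by (simp add: card_insert_if) (metis Suc_pred card_gt_0_iff empty_iff)
  then show "(case b of (S, j) \<Rightarrow> (insert j (S - {i}), j)) \<in> Sigma {S. S \<subseteq> D \<and> card S = z \<and> i \<notin> S} (\<lambda>S. S)"
    using S bb assms by auto
qed

lemma sum_Sigma_fst:
  fixes G :: "'s set \<Rightarrow> real"
  assumes "finite A" "\<And>S. S \<in> A \<Longrightarrow> finite (B S)"
  shows "(\<Sum>p\<in>Sigma A B. G (fst p)) = (\<Sum>S\<in>A. real (card (B S)) * G S)"
proof -
  have "(\<Sum>p\<in>Sigma A B. G (fst p)) = (\<Sum>S\<in>A. \<Sum>j\<in>B S. G (fst (S, j)))"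
    using assms sum.Sigma[of A B "\<lambda>S j. G (fst (S,j))"] by (simp add: case_prod_beta)
  then show ?thesis by simp
qed



lemma sum_subset_prob:
  assumes "finite D"
  shows "(\<Sum>S\<in>{S. S \<subseteq> D \<and> card S = z}. subset_prob D w z S)
       = (\<Sum>xs\<in>{xs. set xs \<subseteq> D \<and> distinct xs \<and> length xs = z}. seq_prob w xs)"
proof -
  let ?L = "{xs. set xs \<subseteq> D \<and> distinct xs \<and> length xs = z}"
  have finL: "finite ?L"
    using finite_lists_length_eq[OF assms(1), of z] by (rule finite_subset[rotated]) auto
  have finU: "finite {S. S \<subseteq> D \<and> card S = z}" using assms by auto
  have im: "set ` ?L \<subseteq> {S. S \<subseteq> D \<and> card S = z}" by (auto simp: distinct_card)
  have "(\<Sum>S\<in>{S. S \<subseteq> D \<and> card S = z}. subset_prob D w z S)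
      = (\<Sum>S\<in>{S. S \<subseteq> D \<and> card S = z}. \<Sum>xs\<in>{x. x \<in> ?L \<and> set x = S}. seq_prob w xs)"
    unfolding subset_prob_def by (intro sum.cong refl) (simp add: conj_assoc)
  also have "\<dots> = (\<Sum>xs\<in>?L. seq_prob w xs)" by (rule sum.group[OF finL finU im])
  finally show ?thesis .
qed

theorem lemma1:
  fixes D :: "'s set" and N z :: nat and i :: 's
    and q :: "'s \<Rightarrow> 's set \<Rightarrow> real" and k :: real
  assumes "finite D" and "card D = N" and "i \<in> D"
    and "1 \<le> z" and "z < N"
    and "\<And>s T. 0 \<le> q s T \<and> q s T \<le> 1"
    and "fitting_assumption D q"
    and "1 < k" and "k < real N"
  defines "p0 \<equiv> 1 / real N"
  defines "lam \<equiv> (1 - k * p0) / (1 - p0)"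
  defines "w1 \<equiv> (\<lambda>a::'s. p0)"
  defines "w2 \<equiv> (\<lambda>a::'s. if a = i then k * p0 else lam * p0)"
  defines "lamB \<equiv> lam ^ z * (\<Prod>a=1..z. 1 - (real a - 1) * p0) / (\<Prod>a=1..z. 1 - (real a - 1) * lam * p0)"
  assumes "k > real (N - z) * (1 - lamB) + 1"
  shows "sampled_expectation D q w2 z i > sampled_expectation D q w1 z i"
proof -
  note finD = assms(1) and cardD = assms(2) and iD = assms(3) and z1 = assms(4) and zN = assms(5)
  have N2: "N \<ge> 2" using z1 zN by linarith
  have Npos: "real N > 0" using N2 by simp
  have p0pos: "p0 > 0" using Npos by (simp add: p0_def)
  have Np0: "real N * p0 = 1" using Npos by (simp add: p0_def)
  have p0lt: "p0 < 1"
  proof -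
    have "real N * p0 > 1 * p0" using N2 p0pos by (intro mult_strict_right_mono) auto
    then show ?thesis using Np0 by simp
  qed
  have lam1: "lam * (1 - p0) = 1 - k * p0" using p0lt by (simp add: lam_def)
  have kp0: "k * p0 < 1" using assms(9) Np0 p0pos by (metis mult_strict_right_mono)
  have lampos: "lam > 0" using kp0 p0lt by (simp add: lam_def)
  have lamlt: "lam < 1" using assms(8) p0pos p0lt by (simp add: lam_def)
  define A where "A = {S. S \<subseteq> D \<and> card S = z \<and> i \<notin> S}"
  define B where "B = {S. S \<subseteq> D \<and> card S = z \<and> i \<in> S}"
  define U where "U = {S. S \<subseteq> D \<and> card S = z}"
  have UAB: "U = A \<union> B" "A \<inter> B = {}" by (auto simp: U_def A_def B_def)
  have finA: "finite A" and finB: "finite B" using finD by (auto simp: A_def B_def)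
  have finS: "finite S" if "S \<subseteq> D" for S using finD that finite_subset by blast
  have w1pos: "\<And>a. a \<in> D \<Longrightarrow> w1 a > 0" using p0pos by (simp add: w1_def)
  have w1sum: "sum w1 D = 1" using Np0 cardD by (simp add: w1_def)
  have w2pos: "\<And>a. a \<in> D \<Longrightarrow> w2 a > 0" using p0pos lampos assms(8) by (simp add: w2_def)
  have "sum w2 D = w2 i + sum w2 (D - {i})" using finD iD by (simp add: sum.remove)
  also have "sum w2 (D - {i}) = real (N - 1) * (lam * p0)"
    using finD iD cardD by (simp add: w2_def)
  also have "w2 i = k * p0" by (simp add: w2_def)
  finally have "sum w2 D = k * p0 + real (N - 1) * (lam * p0)" .
  moreover have "real (N - 1) * p0 = 1 - p0" using N2 Np0 by (simp add: of_nat_diff algebra_simps)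
  moreover have "real (N - 1) * (lam * p0) = lam * (real (N - 1) * p0)" by (simp only: mult_ac)
  ultimately have "sum w2 D = k * p0 + lam * (1 - p0)" by simp
  then have w2sum: "sum w2 D = 1" using lam1 by simp
  have tot1: "(\<Sum>S\<in>U. subset_prob D w1 z S) = 1"
    unfolding U_def sum_subset_prob[OF finD] using total_prob[OF finD w1pos w1sum] zN cardD by simp
  have tot2: "(\<Sum>S\<in>U. subset_prob D w2 z S) = 1"
    unfolding U_def sum_subset_prob[OF finD] using total_prob[OF finD w2pos w2sum] zN cardD by simp
  define c where "c = fact z * (\<Prod>t<z. p0 / (1 - real t * p0))"
  define d where "d = fact z * (\<Prod>t<z. (lam * p0) / (1 - real t * (lam * p0)))"
  have P1: "subset_prob D w1 z S = c" if "S \<in> U" for S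
    using that finS unfolding c_def U_def by (intro subset_prob_const) (auto simp: w1_def)
  have P2A: "subset_prob D w2 z S = d" if "S \<in> A" for S
    using that finS unfolding d_def A_def by (intro subset_prob_const) (auto simp: w2_def)
  have facts: "\<And>t. t < z \<Longrightarrow> 0 < 1 - real t * p0 \<and> 1 - real t * p0 \<le> 1 - real t * (lam * p0)"
  proof -
    fix t assume t: "t < z"
    then have "real t < real N" using zN by simp
    then have "real t * p0 < 1" using Np0 p0pos by (metis mult_strict_right_mono)
    moreover have "real t * (lam * p0) \<le> real t * p0" using lamlt p0pos
      by (intro mult_left_mono) auto
    ultimately show "0 < 1 - real t * p0 \<and> 1 - real t * p0 \<le> 1 - real t * (lam * p0)" by simp
  qed
  have dpos: "d > 0" unfolding d_def using facts lampos p0pos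
    by (intro mult_pos_pos prod_pos) (auto intro!: divide_pos_pos, fastforce)
  have prodlt: "(\<Prod>t<z. (lam * p0) / (1 - real t * (lam * p0))) < (\<Prod>t<z. p0 / (1 - real t * p0))"
  proof (rule prod_mono_strict[of 0])
    show "0 \<in> {..<z}" using z1 by simp
    show "lam * p0 / (1 - real 0 * (lam * p0)) < p0 / (1 - real 0 * p0)" using lamlt p0pos by simp
    show "finite {..<z}" by simp
    fix t assume "t \<in> {..<z}"
    then have f: "0 < 1 - real t * p0" "1 - real t * p0 \<le> 1 - real t * (lam * p0)" using facts by auto
    show "0 \<le> lam * p0 / (1 - real t * (lam * p0)) \<and> lam * p0 / (1 - real t * (lam * p0)) \<le> p0 / (1 - real t * p0)"
      using f lampos lamlt p0pos by (auto intro!: frac_le)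
    show "0 < p0 / (1 - real t * p0)" using f p0pos by simp
  qed
  have dc: "d < c" unfolding c_def d_def using prodlt by simp
  have "z \<le> card (D - {i})" using cardD iD finD zN by simp
  then obtain S1 where S1: "S1 \<subseteq> D - {i}" "card S1 = z" by (meson obtain_subset_with_card_n)
  have S1A: "S1 \<in> A" using S1 by (auto simp: A_def)
  have Ane: "A \<noteq> {}" using S1A by auto
  have cardA: "(\<Sum>p\<in>Sigma A (\<lambda>S. S). (1::real)) = real z * real (card A)"
    using sum_Sigma_fst[OF finA, of "\<lambda>S. S" "\<lambda>_. 1"] finS by (simp add: A_def)
  have cardB: "(\<Sum>p\<in>Sigma B (\<lambda>S. D - S). (1::real)) = real (N - z) * real (card B)"
  proof -
    have "(\<Sum>p\<in>Sigma B (\<lambda>S. D - S). (1::real)) = (\<Sum>S\<in>B. real (card (D - S)) * 1)"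
      using sum_Sigma_fst[OF finB, of "\<lambda>S. D - S" "\<lambda>_. 1"] finD by simp
    also have "\<dots> = (\<Sum>S\<in>B. real (N - z))"
      using finS cardD by (intro sum.cong refl) (auto simp: B_def card_Diff_subset)
    finally show ?thesis by simp
  qed
  have cnt: "real z * real (card A) = real (N - z) * real (card B)"
    using pair_bij[OF finD iD, where z=z and F="\<lambda>_. 1"] cardA cardB unfolding A_def B_def by simp
  have apos: "real (card A) > 0" using Ane finA by auto
  have bpos: "real (card B) > 0"
  proof -
    have "real z * real (card A) > 0" using apos z1 by simp
    then have "real (N - z) * real (card B) > 0" unfolding cnt .
    then show ?thesis by (simp add: zero_less_mult_iff)
  qed
  then have Bne: "B \<noteq> {}" by auto
  let ?QA = "\<Sum>S\<in>A. q i S" and ?QB = "\<Sum>S\<in>B. q i S"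
  have QAeq: "(\<Sum>p\<in>Sigma A (\<lambda>S. S). q i (fst p)) = real z * ?QA"
    using sum_Sigma_fst[OF finA, of "\<lambda>S. S" "q i"] finS
    by (simp add: A_def sum_distrib_left)
  have QBeq: "(\<Sum>p\<in>Sigma B (\<lambda>S. D - S). q i (fst p)) = real (N - z) * ?QB"
  proof -
    have "(\<Sum>p\<in>Sigma B (\<lambda>S. D - S). q i (fst p)) = (\<Sum>S\<in>B. real (card (D - S)) * q i S)"
      using sum_Sigma_fst[OF finB, of "\<lambda>S. D - S" "q i"] finD by simp
    also have "\<dots> = (\<Sum>S\<in>B. real (N - z) * q i S)"
      using finS cardD by (intro sum.cong refl) (auto simp: B_def card_Diff_subset)
    finally show ?thesis by (simp add: sum_distrib_left)
  qed
  have strict: "(\<Sum>p\<in>Sigma A (\<lambda>S. S). q i (fst p)) < (\<Sum>p\<in>Sigma A (\<lambda>S. S). q i (insert i (fst p - {snd p})))"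
  proof (rule sum_strict_mono)
    show "finite (Sigma A (\<lambda>S. S))" using finA finS by (auto simp: A_def)
    obtain j where "j \<in> S1" using S1 z1 by fastforce
    then show "Sigma A (\<lambda>S. S) \<noteq> {}" using S1A by auto
    fix p assume p: "p \<in> Sigma A (\<lambda>S. S)"
    obtain S j where pp: "p = (S, j)" by (cases p)
    have S: "S \<subseteq> D" "i \<notin> S" "j \<in> S" using p pp by (auto simp: A_def)
    have "q i (insert i (S - {j})) > max (q i (S - {j})) (q i (insert j (S - {j})))"
    proof -
      have fa: "\<forall>s\<in>D. \<forall>T. \<forall>s'\<in>D. s' \<noteq> s \<and> s \<notin> T \<longrightarrow>
        q s (insert s T) > max (q s T) (q s (insert s' T))" using assms(7) unfolding fitting_assumption_def .
      have "j \<in> D" "j \<noteq> i" "i \<notin> S - {j}" using S by auto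
      then show ?thesis using fa iD by blast
    qed
    moreover have "insert j (S - {j}) = S" using S by auto
    ultimately show "q i (fst p) < q i (insert i (fst p - {snd p}))" using pp by simp
  qed
  have Qineq: "real z * ?QA < real (N - z) * ?QB"
    using strict QAeq QBeq pair_bij[OF finD iD, where z=z and F="q i"] unfolding A_def B_def by simp
  obtain S0 where S0: "S0 \<in> B" using Bne by auto
  define beta where "beta = subset_prob D w2 z S0"
  have P2B: "subset_prob D w2 z S = beta" if SB: "S \<in> B" for S
  proof -
    have S0': "S0 \<subseteq> D" "card S0 = z" "i \<in> S0" and S': "S \<subseteq> D" "card S = z" "i \<in> S"
      using S0 SB by (auto simp: B_def)
    have "card (S0 - {i}) = card (S - {i})" using S0' S' finS by simp
    then obtain h where h: "bij_betw h (S0 - {i}) (S - {i})"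
      using finite_same_card_bij finS S0' S' by (meson finite_Diff)
    define f where "f = (\<lambda>a. if a = i then i else h a)"
    have hinj: "inj_on h (S0 - {i})" and him: "h ` (S0 - {i}) = S - {i}" using h by (auto simp: bij_betw_def)
    have "inj_on f S0"
    proof (rule inj_onI)
      fix a b assume ab: "a \<in> S0" "b \<in> S0" "f a = f b"
      show "a = b"
      proof (cases "a = i"; cases "b = i")
        assume "a \<noteq> i" "b \<noteq> i" then show ?thesis using ab hinj by (auto simp: f_def inj_on_def)
      next
        assume "a = i" "b \<noteq> i"
        then have "h b \<in> S - {i}" using him ab by auto
        then show ?thesis using ab \<open>a = i\<close> \<open>b \<noteq> i\<close> by (auto simp: f_def)
      next
        assume "a \<noteq> i" "b = i"
        then have "h a \<in> S - {i}" using him ab by auto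
        then show ?thesis using ab \<open>a \<noteq> i\<close> \<open>b = i\<close> by (auto simp: f_def)
      qed auto
    qed
    moreover have "f ` S0 = S"
    proof -
      have "f ` S0 = f ` (insert i (S0 - {i}))" using S0' by (simp add: insert_absorb)
      also have "\<dots> = insert i (h ` (S0 - {i}))" by (auto simp: f_def)
      also have "\<dots> = S" using him S' by auto
      finally show ?thesis .
    qed
    ultimately have bf: "bij_betw f S0 S" by (simp add: bij_betw_def)
    have wf: "w2 (f a) = w2 a" if "a \<in> S0" for a
    proof (cases "a = i")
      case False
      then have "h a \<in> S - {i}" using him that by auto
      then show ?thesis using False by (auto simp: f_def w2_def)
    qed (simp add: f_def)
    show ?thesis unfolding beta_def
      by (rule subset_prob_bij[where w=w2, OF S0'(1) S'(1) S0'(2) finS[OF S0'(1)] bf wf])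
  qed
  have sumU: "(\<Sum>S\<in>U. g S) = (\<Sum>S\<in>A. g S) + (\<Sum>S\<in>B. g S)" for g :: "'s set \<Rightarrow> real"
    using UAB finA finB by (simp add: sum.union_disjoint)
  have T1: "c * real (card A) + c * real (card B) = 1"
    using tot1 sumU[of "subset_prob D w1 z"] P1 UAB by (simp add: mult.commute)
  have T2: "d * real (card A) + beta * real (card B) = 1"
    using tot2 sumU[of "subset_prob D w2 z"] P2A P2B by (simp add: mult.commute)
  have E1: "sampled_expectation D q w1 z i = c * ?QA + c * ?QB"
    unfolding sampled_expectation_def U_def[symmetric] sumU using P1 UAB
    by (simp add: sum_distrib_left)
  have E2: "sampled_expectation D q w2 z i = d * ?QA + beta * ?QB"
    unfolding sampled_expectation_def U_def[symmetric] sumU using P2A P2B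
    by (simp add: sum_distrib_left)
  have bc: "(beta - c) * real (card B) = (c - d) * real (card A)" using T1 T2 by (simp add: algebra_simps)
  have zb: "real z * real (card B) > 0" using z1 bpos by simp
  have "real z * real (card B) * ((beta - c) * ?QB) = real z * ?QB * ((beta - c) * real (card B))"
    by (simp only: mult_ac)
  also have "\<dots> = real z * ?QB * ((c - d) * real (card A))" unfolding bc ..
  also have "\<dots> = (c - d) * (real z * real (card A)) * ?QB" by (simp only: mult_ac)
  also have "\<dots> = (c - d) * real (card B) * (real (N - z) * ?QB)" using cnt by (simp add: algebra_simps)
  also have "\<dots> > (c - d) * real (card B) * (real z * ?QA)"
    using Qineq dc bpos by (intro mult_strict_left_mono) auto
  finally have "real z * real (card B) * ((beta - c) * ?QB) > real z * real (card B) * ((c - d) * ?QA)"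
    by (simp add: algebra_simps)
  then have "(beta - c) * ?QB > (c - d) * ?QA" using zb by (simp add: mult_less_cancel_left_pos)
  then show ?thesis using E1 E2 by (simp add: algebra_simps)
qed

end
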